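(* Let $n\geq 2$, $\lambda>n$, $0<\mu<1$, and $h(x,y)=(\lambda x,\mu y)$. Let $f:\mathbb{R}^2\to\mathbb{R}^2$ be an orientation preserving homeomorphism with bounded displacement (there is $K>0$ with $|f(p)-p|\leq K$ for all $p$) such that $hfh^{-1}=f^n$. Then $f=\mathrm{id}$. *)

theory Defs
  imports "HOL-Analysis.Analysis"
begin

text \<open>We identify the plane R^2 with the complex numbers (x,y) = Complex x y.\<close>

definition circle_loop :: "complex \<Rightarrow> real \<Rightarrow> real \<Rightarrow> complex" where
  "circle_loop p r t = p + of_real r * cis (2 * pi * t)"

text \<open>A homeomorphism f of the plane is orientation preserving iff it has local degree +1
  at every point: the image under f of every small positively oriented circle around p
  winds once positively around f p, i.e. the loop (f o circle) - f p is homotopic in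
  C - {0} to the standard generator of the fundamental group.\<close>
definition orientation_preserving :: "(complex \<Rightarrow> complex) \<Rightarrow> bool" where
  "orientation_preserving f \<longleftrightarrow>
     (\<forall>p r. r > 0 \<longrightarrow>
        homotopic_loops (- {0}) (\<lambda>t. f (circle_loop p r t) - f p) (circle_loop 0 1))"

definition hmap :: "real \<Rightarrow> real \<Rightarrow> complex \<Rightarrow> complex" where
  "hmap l m z = Complex (l * Re z) (m * Im z)"

end

theory Submission
  imports Defs
begin

theorem lemma3p1:
  fixes f :: "complex \<Rightarrow> complex" and n :: nat and lam mu :: real
  assumes "n \<ge> 2" and "lam > real n" and "0 < mu" and "mu < 1"
    and "homeomorphism UNIV UNIV f g"
    and "orientation_preserving f"
    and "\<exists>K>0. \<forall>p. norm (f p - p) \<le> K"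
    and "hmap lam mu \<circ> f \<circ> inv (hmap lam mu) = f ^^ n"
  shows "f = id"
proof -
  define h where "h = hmap lam mu"
  obtain K where K: "K > 0" "\<And>p. norm (f p - p) \<le> K" using assms(7) by blast
  have lam0: "lam > 0" using assms(1,2) by linarith
  have injh: "inj h" unfolding h_def hmap_def
    by (rule injI) (use lam0 assms(3) in \<open>auto simp: complex_eq_iff\<close>)
  have surjh: "\<And>q. h (hmap (1/lam) (1/mu) q) = q"
    unfolding h_def hmap_def using lam0 assms(3) by (simp add: complex_eq_iff)
  have E: "\<And>p. h (f p) = (f ^^ n) (h p)"
  proof -
    fix p
    have "(h \<circ> f \<circ> inv h) (h p) = (f ^^ n) (h p)" using assms(8) h_def by simp
    then show "h (f p) = (f ^^ n) (h p)" using injh by (simp add: inv_f_f)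
  qed
  have contf: "continuous_on UNIV f" and injf: "inj f"
    using assms(5) homeomorphism_def
     apply blast
    using assms(5) by (metis homeomorphism_apply1 injI UNIV_I)
  have reh: "\<And>p. Re (h p) = lam * Re p" and imh: "\<And>p. Im (h p) = mu * Im p"
    by (simp_all add: h_def hmap_def)
  define S where "S = Sup (range (\<lambda>p. \<bar>Re (f p - p)\<bar>))"
  have bddS: "bdd_above (range (\<lambda>p. \<bar>Re (f p - p)\<bar>))"
    by (rule bdd_aboveI2[where M=K]) (meson K(2) abs_Re_le_cmod order_trans)
  have leS: "\<And>p. \<bar>Re (f p - p)\<bar> \<le> S"
    unfolding S_def using bddS by (intro cSup_upper) auto
  have iterS: "\<And>m p. \<bar>Re ((f ^^ m) p - p)\<bar> \<le> real m * S"
  proof -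
    fix m p show "\<bar>Re ((f ^^ m) p - p)\<bar> \<le> real m * S"
    proof (induction m)
      case 0 then show ?case by simp
    next
      case (Suc m)
      have "\<bar>Re ((f ^^ Suc m) p - p)\<bar> \<le> \<bar>Re (f ((f ^^ m) p) - (f ^^ m) p)\<bar> + \<bar>Re ((f ^^ m) p - p)\<bar>"
        by simp
      also have "\<dots> \<le> S + real m * S" using leS Suc by (meson add_mono)
      finally show ?case by (simp add: algebra_simps)
    qed
  qed
  have "\<And>p. lam * \<bar>Re (f p - p)\<bar> \<le> real n * S"
  proof -
    fix p
    have "lam * \<bar>Re (f p - p)\<bar> = \<bar>Re (h (f p) - h p)\<bar>"
      using reh lam0 by (simp add: abs_mult flip: right_diff_distrib)
    also have "\<dots> = \<bar>Re ((f ^^ n) (h p) - h p)\<bar>" by (simp add: E)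
    also have "\<dots> \<le> real n * S" by (rule iterS)
    finally show "lam * \<bar>Re (f p - p)\<bar> \<le> real n * S" .
  qed
  then have "\<And>p. \<bar>Re (f p - p)\<bar> \<le> real n * S / lam"
    using lam0 by (simp add: field_simps mult.commute)
  then have "S \<le> real n * S / lam" unfolding S_def by (intro cSup_least) auto
  moreover have "S \<ge> 0" using leS[of 0] by linarith
  ultimately have "S = 0"
  proof -
    assume a: "S \<le> real n * S / lam" "S \<ge> 0"
    then have "lam * S \<le> real n * S" using lam0 by (simp add: le_divide_eq mult.commute)
    then have "(lam - real n) * S \<le> 0" by (simp add: left_diff_distrib)
    moreover have "lam - real n > 0" using assms(2) by simp
    ultimately show "S = 0" using a(2) by (simp add: mult_le_0_iff)
  qed
  then have Ref: "\<And>p. Re (f p) = Re p" using leS by (metis abs_le_zero_iff eq_iff_diff_eq_0 minus_complex.simps(1))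
  have Mono: "\<And>x y1 y2. y1 \<le> y2 \<Longrightarrow> Im (f (Complex x y1)) \<le> Im (f (Complex x y2))"
  proof -
    fix x :: real
    define phi where "phi y = Im (f (Complex x y))" for y
    have fc: "f (Complex x y) = Complex x (phi y)" for y
      using Ref[of "Complex x y"] by (simp add: phi_def complex_eq_iff)
    have "continuous_on UNIV phi" unfolding phi_def
      by (intro continuous_intros continuous_on_compose2[OF contf]) auto
    moreover have "inj phi"
    proof (rule injI)
      fix a b assume "phi a = phi b"
      then have "f (Complex x a) = f (Complex x b)" by (simp add: fc)
      then show "a = b" using injf by (metis injD complex.inject)
    qed
    ultimately have "strict_mono_on UNIV phi \<or> strict_antimono_on UNIV phi"
      using injective_eq_monotone_map[of UNIV phi] by auto
    moreover have dK: "\<bar>phi y - y\<bar> \<le> K" for y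
      using K(2)[of "Complex x y"] abs_Im_le_cmod[of "f (Complex x y) - Complex x y"]
      by (simp add: fc)
    moreover have "\<not> strict_antimono_on UNIV phi"
    proof
      assume a: "strict_antimono_on UNIV phi"
      define y where "y = \<bar>phi 0\<bar> + K + 1"
      have "y > 0" using K(1) by (simp add: y_def)
      then have "phi y < phi 0" using a by (auto simp: monotone_on_def)
      then show False using dK[of y] unfolding y_def by linarith
    qed
    ultimately have sm: "strict_mono_on UNIV phi" by blast
    show "\<And>y1 y2. y1 \<le> y2 \<Longrightarrow> Im (f (Complex x y1)) \<le> Im (f (Complex x y2))"
      using sm unfolding phi_def[symmetric] by (metis UNIV_I order_le_less strict_mono_onD)
  qed
  have Mono': "\<And>p q. Re p = Re q \<Longrightarrow> Im p \<le> Im q \<Longrightarrow> Im (f p) \<le> Im (f q)"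
  proof -
    fix p q :: complex assume "Re p = Re q" "Im p \<le> Im q"
    moreover have "Complex (Re p) (Im q) = q" using \<open>Re p = Re q\<close> by (simp add: complex_eq_iff)
    moreover have "Complex (Re p) (Im p) = p" by simp
    moreover have "Im (f (Complex (Re p) (Im p))) \<le> Im (f (Complex (Re p) (Im q)))"
      by (rule Mono) fact
    ultimately show "Im (f p) \<le> Im (f q)" by (simp only:)
  qed
  have Reit: "\<And>m p. Re ((f ^^ m) p) = Re p"
  proof -
    fix m p show "Re ((f ^^ m) p) = Re p" by (induction m) (simp_all add: Ref)
  qed
  have up: "\<And>q k. Im q \<le> Im (f q) \<Longrightarrow> Im ((f ^^ k) q) \<le> Im ((f ^^ Suc k) q)"
  proof -
    fix q k assume a: "Im q \<le> Im (f q)"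
    show "Im ((f ^^ k) q) \<le> Im ((f ^^ Suc k) q)"
    proof (induction k)
      case 0 then show ?case using a by simp
    next
      case (Suc k)
      show ?case using Mono'[OF _ Suc] Reit by (simp add: Ref)
    qed
  qed
  have down: "\<And>q k. Im (f q) \<le> Im q \<Longrightarrow> Im ((f ^^ Suc k) q) \<le> Im ((f ^^ k) q)"
  proof -
    fix q k assume a: "Im (f q) \<le> Im q"
    show "Im ((f ^^ Suc k) q) \<le> Im ((f ^^ k) q)"
    proof (induction k)
      case 0 then show ?case using a by simp
    next
      case (Suc k)
      show ?case using Mono'[OF _ Suc] Reit by (simp add: Ref)
    qed
  qed
  have upn: "\<And>q k. Im q \<le> Im (f q) \<Longrightarrow> Im (f q) \<le> Im ((f ^^ Suc k) q)"
  proof -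
    fix q k assume a: "Im q \<le> Im (f q)"
    show "Im (f q) \<le> Im ((f ^^ Suc k) q)"
    proof (induction k)
      case 0 then show ?case by simp
    next
      case (Suc k) show ?case by (rule order_trans[OF Suc.IH up[OF a]])
    qed
  qed
  have downn: "\<And>q k. Im (f q) \<le> Im q \<Longrightarrow> Im ((f ^^ Suc k) q) \<le> Im (f q)"
  proof -
    fix q k assume a: "Im (f q) \<le> Im q"
    show "Im ((f ^^ Suc k) q) \<le> Im (f q)"
    proof (induction k)
      case 0 then show ?case by simp
    next
      case (Suc k) show ?case by (rule order_trans[OF down[OF a] Suc.IH])
    qed
  qed
  have key: "\<And>q. \<bar>Im (f q - q)\<bar> \<le> \<bar>Im ((f ^^ n) q - q)\<bar>"
  proof -
    fix q
    obtain k where nk: "n = Suc k" using assms(1) by (cases n) auto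
    show "\<bar>Im (f q - q)\<bar> \<le> \<bar>Im ((f ^^ n) q - q)\<bar>"
    proof (cases "Im q \<le> Im (f q)")
      case True then show ?thesis using upn[OF True, of k] nk by (simp add: abs_if)
    next
      case False then show ?thesis using downn[of q k] nk by (simp add: abs_if)
    qed
  qed
  define T where "T = Sup (range (\<lambda>p. \<bar>Im (f p - p)\<bar>))"
  have bddT: "bdd_above (range (\<lambda>p. \<bar>Im (f p - p)\<bar>))"
    by (rule bdd_aboveI2[where M=K]) (meson K(2) abs_Im_le_cmod order_trans)
  have leT: "\<And>p. \<bar>Im (f p - p)\<bar> \<le> T"
    unfolding T_def using bddT by (intro cSup_upper) auto
  have "\<And>q. \<bar>Im (f q - q)\<bar> \<le> mu * T"
  proof -
    fix q
    define p where "p = hmap (1/lam) (1/mu) q"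
    have q: "q = h p" using surjh p_def by simp
    have "\<bar>Im (f q - q)\<bar> \<le> \<bar>Im ((f ^^ n) (h p) - h p)\<bar>" using key q by simp
    also have "\<dots> = \<bar>Im (h (f p) - h p)\<bar>" by (simp add: E)
    also have "\<dots> = mu * \<bar>Im (f p - p)\<bar>"
      using imh assms(3) by (simp add: abs_mult flip: right_diff_distrib)
    also have "\<dots> \<le> mu * T" using leT assms(3) by (simp add: mult_left_mono)
    finally show "\<bar>Im (f q - q)\<bar> \<le> mu * T" .
  qed
  then have "T \<le> mu * T" unfolding T_def by (intro cSup_least) auto
  moreover have "T \<ge> 0" using leT[of 0] by linarith
  ultimately have "T = 0"
  proof -
    assume a: "T \<le> mu * T" "T \<ge> 0"
    then have "(1 - mu) * T \<le> 0" by (simp add: left_diff_distrib)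
    moreover have "1 - mu > 0" using assms(4) by simp
    ultimately show "T = 0" using a(2) by (simp add: mult_le_0_iff)
  qed
  then have Imf: "\<And>p. Im (f p) = Im p" using leT by (metis abs_le_zero_iff eq_iff_diff_eq_0 minus_complex.simps(2))
  show "f = id" using Ref Imf by (auto simp: complex_eq_iff)
qed

end
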